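(* Let $\mathcal{I}_{\mathrm{inv}}$ be an invariancy interval and let $\bar\epsilon\in\operatorname{int}(\mathcal{E})$ be a boundary point of $\mathcal{I}_{\mathrm{inv}}$. Then for every $\hat\epsilon\in\mathcal{I}_{\mathrm{inv}}$, $\operatorname{rank}(X^*(\hat\epsilon))\neq\operatorname{rank}(X^*(\bar\epsilon))$ or $\operatorname{rank}(S^*(\hat\epsilon))\neq\operatorname{rank}(S^*(\bar\epsilon))$, where $(X^*(\epsilon),y^*(\epsilon),S^*(\epsilon))$ denotes a maximally complementary optimal solution at $\epsilon$.
   Context: Let $\mathbb{S}^n$ be the real symmetric $n\times n$ matrices, $\langle C,X\rangle=\operatorname{trace}(CX)$, $\succeq0$ positive semidefinite, $\succ0$ positive definite. Fix $C,\bar C,A^1,\dots,A^m\in\mathbb{S}^n$, $b\in\mathbb{R}^m$; $(P_\epsilon)$: $\inf\{\langle C+\epsilon\bar C,X\rangle:\langle A^i,X\rangle=b_i,\ X\succeq0\}$; $(D_\epsilon)$: $\sup\{b^Ty:\sum_iy_iA^i+S=C+\epsilon\bar C,\ S\succeq0\}$; $v(\epsilon)$ the optimal value of $(P_\epsilon)$, $\mathcal{E}=\{\epsilon:v(\epsilon)>-\infty\}$. Standing assumptions: the $A^i$ are linearly independent and there exist $X\succ0$ feasible for $(P_0)$ and $(y,S)$ with $S\succ0$ feasible for $(D_0)$; then for $\epsilon\in\operatorname{int}(\mathcal{E})$ the optimal sets $\mathcal{P}^*(\epsilon)$, $\mathcal{D}^*(\epsilon)$ are nonempty compact and strong duality holds.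 A maximally complementary optimal solution at $\epsilon$ is an optimal $(X^*(\epsilon),y^*(\epsilon),S^*(\epsilon))$ with $X^*(\epsilon)\in\operatorname{ri}\mathcal{P}^*(\epsilon)$ and $(y^*(\epsilon),S^*(\epsilon))\in\operatorname{ri}\mathcal{D}^*(\epsilon)$; its ranks are independent of the choice. Optimal partition: $\pi(\epsilon)=(\mathcal{R}(X^*(\epsilon)),(\mathcal{R}(X^*(\epsilon))+\mathcal{R}(S^*(\epsilon)))^\perp,\mathcal{R}(S^*(\epsilon)))$, with $\mathcal{R}$ the column space. An invariancy set is a maximal subset of $\operatorname{int}(\mathcal{E})$ on which $\pi(\epsilon)$ is constant; it is either a singleton or an open interval, and in the latter case it is called an invariancy interval. *)

theory Defs
  imports "HOL-Analysis.Analysis"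
begin

definition symmetric_mat :: "real^'n^'n \<Rightarrow> bool" where
  "symmetric_mat M \<longleftrightarrow> transpose M = M"

definition psd :: "real^'n^'n \<Rightarrow> bool" where
  "psd M \<longleftrightarrow> symmetric_mat M \<and> (\<forall>v. 0 \<le> v \<bullet> (M *v v))"

definition pd :: "real^'n^'n \<Rightarrow> bool" where
  "pd M \<longleftrightarrow> symmetric_mat M \<and> (\<forall>v. v \<noteq> 0 \<longrightarrow> 0 < v \<bullet> (M *v v))"

definition frob :: "real^'n^'n \<Rightarrow> real^'n^'n \<Rightarrow> real" where
  "frob M N = trace (M ** N)"

definition col_space :: "real^'n^'n \<Rightarrow> (real^'n) set" where
  "col_space M = range (\<lambda>v. M *v v)"

definition primal_feas :: "('m::finite \<Rightarrow> real^'n^'n) \<Rightarrow> real^'m \<Rightarrow> (real^'n^'n) set" where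
  "primal_feas A b = {X. symmetric_mat X \<and> psd X \<and> (\<forall>i. frob (A i) X = b $ i)}"

definition dual_feas :: "real^'n^'n \<Rightarrow> real^'n^'n \<Rightarrow> ('m::finite \<Rightarrow> real^'n^'n) \<Rightarrow> real
      \<Rightarrow> ((real^'m) \<times> (real^'n^'n)) set" where
  "dual_feas C Cb A \<epsilon> = {(y, S). psd S \<and> (\<Sum>i\<in>UNIV. y $ i *\<^sub>R A i) + S = C + \<epsilon> *\<^sub>R Cb}"

text \<open>Optimal value (in the extended reals; +\<infinity> if infeasible).\<close>
definition opt_val :: "real^'n^'n \<Rightarrow> real^'n^'n \<Rightarrow> ('m::finite \<Rightarrow> real^'n^'n) \<Rightarrow> real^'m \<Rightarrow> real \<Rightarrow> ereal" where
  "opt_val C Cb A b \<epsilon> = (INF X\<in>primal_feas A b. ereal (frob (C + \<epsilon> *\<^sub>R Cb) X))"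

definition E_set :: "real^'n^'n \<Rightarrow> real^'n^'n \<Rightarrow> ('m::finite \<Rightarrow> real^'n^'n) \<Rightarrow> real^'m \<Rightarrow> real set" where
  "E_set C Cb A b = {\<epsilon>. opt_val C Cb A b \<epsilon> > -\<infinity>}"

definition primal_opt :: "real^'n^'n \<Rightarrow> real^'n^'n \<Rightarrow> ('m::finite \<Rightarrow> real^'n^'n) \<Rightarrow> real^'m \<Rightarrow> real
      \<Rightarrow> (real^'n^'n) set" where
  "primal_opt C Cb A b \<epsilon> = {X \<in> primal_feas A b.
      \<forall>X' \<in> primal_feas A b. frob (C + \<epsilon> *\<^sub>R Cb) X \<le> frob (C + \<epsilon> *\<^sub>R Cb) X'}"

definition dual_opt :: "real^'n^'n \<Rightarrow> real^'n^'n \<Rightarrow> ('m::finite \<Rightarrow> real^'n^'n) \<Rightarrow> real^'m \<Rightarrow> real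
      \<Rightarrow> ((real^'m) \<times> (real^'n^'n)) set" where
  "dual_opt C Cb A b \<epsilon> = {(y, S) \<in> dual_feas C Cb A \<epsilon>.
      \<forall>(y', S') \<in> dual_feas C Cb A \<epsilon>. b \<bullet> y' \<le> b \<bullet> y}"

definition max_compl :: "real^'n^'n \<Rightarrow> real^'n^'n \<Rightarrow> ('m::finite \<Rightarrow> real^'n^'n) \<Rightarrow> real^'m \<Rightarrow> real
      \<Rightarrow> real^'n^'n \<Rightarrow> real^'m \<Rightarrow> real^'n^'n \<Rightarrow> bool" where
  "max_compl C Cb A b \<epsilon> X y S \<longleftrightarrow>
      X \<in> rel_interior (primal_opt C Cb A b \<epsilon>) \<and> (y, S) \<in> rel_interior (dual_opt C Cb A b \<epsilon>)"

definition opt_partition :: "real^'n^'n \<Rightarrow> real^'n^'n \<Rightarrow> ('m::finite \<Rightarrow> real^'n^'n) \<Rightarrow> real^'m \<Rightarrow> real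
      \<Rightarrow> (real^'n) set \<times> (real^'n) set \<times> (real^'n) set" where
  "opt_partition C Cb A b \<epsilon> =
     (let (X, y, S) = (SOME (X, y, S). max_compl C Cb A b \<epsilon> X y S) in
       (col_space X,
        orthogonal_comp {u + v | u v. u \<in> col_space X \<and> v \<in> col_space S},
        col_space S))"

definition invariancy_set :: "real^'n^'n \<Rightarrow> real^'n^'n \<Rightarrow> ('m::finite \<Rightarrow> real^'n^'n) \<Rightarrow> real^'m
      \<Rightarrow> real set \<Rightarrow> bool" where
  "invariancy_set C Cb A b I \<longleftrightarrow>
     I \<noteq> {} \<and> I \<subseteq> interior (E_set C Cb A b) \<and>
     (\<forall>e1\<in>I. \<forall>e2\<in>I. opt_partition C Cb A b e1 = opt_partition C Cb A b e2) \<and>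
     (\<forall>J. I \<subseteq> J \<and> J \<subseteq> interior (E_set C Cb A b) \<and>
          (\<forall>e1\<in>J. \<forall>e2\<in>J. opt_partition C Cb A b e1 = opt_partition C Cb A b e2) \<longrightarrow> J = I)"

definition invariancy_interval :: "real^'n^'n \<Rightarrow> real^'n^'n \<Rightarrow> ('m::finite \<Rightarrow> real^'n^'n) \<Rightarrow> real^'m
      \<Rightarrow> real set \<Rightarrow> bool" where
  "invariancy_interval C Cb A b I \<longleftrightarrow>
     invariancy_set C Cb A b I \<and> open I \<and> is_interval I"

end

theory Submission
  imports Defs
begin


lemma sym_iff: "symmetric_mat (M::real^'n^'n) \<longleftrightarrow> (\<forall>i j. M$i$j = M$j$i)"
  unfolding symmetric_mat_def transpose_def by (auto simp: vec_eq_iff)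

lemma qf_expand: "v \<bullet> ((M::real^'n^'n) *v w) = (\<Sum>i\<in>UNIV. \<Sum>j\<in>UNIV. v$i * M$i$j * w$j)"
  by (simp add: inner_vec_def matrix_vector_mult_def sum_distrib_left mult.assoc)

lemma frob_expand: "frob (M::real^'n^'n) N = (\<Sum>i\<in>UNIV. \<Sum>k\<in>UNIV. M$i$k * N$k$i)"
  by (simp add: frob_def trace_def matrix_matrix_mult_def)

lemma frob_add_left: "frob (M + M') N = frob M N + frob M' N"
  by (simp add: frob_expand distrib_right sum.distrib)
lemma frob_add_right: "frob N (M + M') = frob N M + frob N M'"
  by (simp add: frob_expand distrib_left sum.distrib)
lemma frob_scale_left: "frob (c *\<^sub>R M) N = c * frob M N"
  by (simp add: frob_expand sum_distrib_left mult.assoc)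
lemma frob_scale_right: "frob N (c *\<^sub>R M) = c * frob N M"
  by (simp add: frob_expand sum_distrib_left mult.left_commute)
lemma frob_diff_left: "frob (M - M') N = frob M N - frob M' N"
  by (simp add: frob_expand left_diff_distrib sum_subtractf)
lemma frob_diff_right: "frob N (M - M') = frob N M - frob N M'"
  by (simp add: frob_expand right_diff_distrib sum_subtractf)
lemma frob_zero_right[simp]: "frob N 0 = 0"
  by (simp add: frob_expand)
lemma frob_zero_left[simp]: "frob 0 N = 0"
  by (simp add: frob_expand)
lemma frob_sum_left: "frob (\<Sum>i\<in>F. f i) N = (\<Sum>i\<in>F. frob (f i) N)"
  by (induction F rule: infinite_finite_induct) (auto simp: frob_add_left)
lemma frob_comm: "frob M N = frob N M"
  unfolding frob_def by (rule trace_mul_sym)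

lemma sym_inner: "symmetric_mat M \<Longrightarrow> v \<bullet> ((M::real^'n^'n) *v w) = (M *v v) \<bullet> w"
  by (metis dot_lmul_matrix symmetric_mat_def transpose_matrix_vector)

definition outer :: "real^'n \<Rightarrow> real^'n^'n" where
  "outer u = (\<chi> i j. u$i * u$j)"

lemma outer_sym: "symmetric_mat (outer u)"
  by (simp add: sym_iff outer_def mult.commute)

lemma outer_mv: "outer u *v w = (u \<bullet> w) *\<^sub>R u"
  by (simp add: outer_def matrix_vector_mult_def vec_eq_iff inner_vec_def sum_distrib_left
      mult.commute mult.left_commute)

lemma frob_outer: "frob S (outer u) = u \<bullet> (S *v u)"
proof -
  have "frob S (outer u) = (\<Sum>i\<in>UNIV. \<Sum>k\<in>UNIV. S$i$k * (u$k * u$i))"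
    by (simp add: frob_expand outer_def)
  also have "\<dots> = (\<Sum>i\<in>UNIV. u$i * (\<Sum>k\<in>UNIV. S$i$k * u$k))"
    by (simp add: sum_distrib_left mult_ac)
  also have "\<dots> = u \<bullet> (S *v u)"
    by (simp add: inner_vec_def matrix_vector_mult_def)
  finally show ?thesis .
qed

lemma outer_scale: "outer (c *\<^sub>R u) = (c*c) *\<^sub>R outer u"
  by (simp add: outer_def vec_eq_iff)

lemma psd_null:
  assumes "psd M" "v \<bullet> ((M::real^'n^'n) *v v) = 0"
  shows "M *v v = 0"
proof (rule ccontr)
  assume ne: "M *v v \<noteq> 0"
  define w where "w = M *v v"
  define a where "a = w \<bullet> w"
  define c where "c = w \<bullet> (M *v w)"
  have sym: "symmetric_mat M" and ps: "\<And>z. 0 \<le> z \<bullet> (M *v z)" using assms(1) by (auto simp: psd_def)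
  have a0: "a > 0" using ne by (simp add: a_def w_def)
  have c0: "c \<ge> 0" using ps by (simp add: c_def)
  have key: "0 \<le> 2*r*a + r*r*c" for r
  proof -
    have "0 \<le> (v + r *\<^sub>R w) \<bullet> (M *v (v + r *\<^sub>R w))" by (rule ps)
    also have "\<dots> = v \<bullet> (M *v v) + r * (v \<bullet> (M *v w)) + r * (w \<bullet> (M *v v)) + r*r*c"
      by (simp add: algebra_simps c_def inner_add_left inner_add_right)
    also have "v \<bullet> (M *v w) = w \<bullet> w" using sym_inner[OF sym, of v w] by (simp add: w_def)
    finally show ?thesis using assms(2) by (simp add: a_def w_def)
  qed
  define r where "r = -a/(c+1)"
  have rneg: "r < 0" using a0 c0 by (simp add: r_def divide_neg_pos)
  have "r*c = -a * (c/(c+1))" by (simp add: r_def)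
  moreover have "c/(c+1) \<le> 1" using c0 by simp
  ultimately have rc: "r*c \<ge> -a"
  proof -
    assume h: "r*c = -a * (c/(c+1))" "c/(c+1) \<le> 1"
    have "a * (c/(c+1)) \<le> a * 1" using h(2) a0 by (intro mult_left_mono) auto
    then show ?thesis using h(1) by simp
  qed
  have "2*r*a + r*r*c = r*(2*a + r*c)" by (simp add: algebra_simps)
  moreover have "r*(2*a + r*c) < 0" using rneg rc a0 by (intro mult_neg_pos) linarith+
  moreover have "0 \<le> 2*r*a + r*r*c" by (rule key)
  ultimately show False by linarith
qed



lemma subspace_col: "subspace (col_space (M::real^'n^'n))"
  unfolding col_space_def
  using linear_subspace_image[OF matrix_vector_mul_linear subspace_UNIV] by (simp add: image_def)

lemma col_perp_null: "symmetric_mat M \<Longrightarrow> (col_space (M::real^'n^'n))\<^sup>\<bottom> = {w. M *v w = 0}"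
proof (intro set_eqI iffI)
  fix w assume s: "symmetric_mat M" and "w \<in> (col_space M)\<^sup>\<bottom>"
  then have "(M *v (M *v w)) \<bullet> w = 0" by (auto simp: orthogonal_comp_def orthogonal_def col_space_def)
  then have "(M *v w) \<bullet> (M *v w) = 0" using sym_inner[OF s, of "M *v w" w] by (simp add: inner_commute)
  then show "w \<in> {w. M *v w = 0}" by simp
next
  fix w assume s: "symmetric_mat M" and "w \<in> {w. M *v w = 0}"
  then show "w \<in> (col_space M)\<^sup>\<bottom>"
    using sym_inner[OF s] by (auto simp: orthogonal_comp_def orthogonal_def col_space_def inner_commute)
qed

lemma col_eq_null_perp: "symmetric_mat M \<Longrightarrow> col_space (M::real^'n^'n) = {w. M *v w = 0}\<^sup>\<bottom>"
  using col_perp_null orthogonal_comp_self[OF subspace_col] by metis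

lemma col_mono:
  assumes "symmetric_mat M" "symmetric_mat N" "\<And>w. M *v w = 0 \<Longrightarrow> (N::real^'n^'n) *v w = 0"
  shows "col_space N \<subseteq> col_space M"
  using col_eq_null_perp[OF assms(1)] col_eq_null_perp[OF assms(2)] assms(3)
  by (metis (mono_tags, lifting) mem_Collect_eq orthogonal_comp_anti_mono subsetI)

lemma sym_add: "symmetric_mat M \<Longrightarrow> symmetric_mat N \<Longrightarrow> symmetric_mat (M + N)"
  by (simp add: sym_iff)
lemma sym_diff: "symmetric_mat M \<Longrightarrow> symmetric_mat N \<Longrightarrow> symmetric_mat (M - N)"
  by (simp add: sym_iff)
lemma sym_scale: "symmetric_mat M \<Longrightarrow> symmetric_mat (c *\<^sub>R M)"
  by (simp add: sym_iff)
lemma sym_zero: "symmetric_mat 0"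
  by (simp add: sym_iff)
lemma sym_sum: "(\<And>i. i \<in> F \<Longrightarrow> symmetric_mat (f i)) \<Longrightarrow> symmetric_mat (\<Sum>i\<in>F. f i)"
  by (induction F rule: infinite_finite_induct) (auto simp: sym_add sym_zero)

lemma psd_comb:
  assumes "psd X" "psd Y" "u \<ge> 0" "v \<ge> 0"
  shows "psd (u *\<^sub>R X + v *\<^sub>R (Y::real^'n^'n))"
proof -
  have "0 \<le> w \<bullet> ((u *\<^sub>R X + v *\<^sub>R Y) *v w)" for w
  proof -
    have "w \<bullet> ((u *\<^sub>R X + v *\<^sub>R Y) *v w) = u * (w \<bullet> (X *v w)) + v * (w \<bullet> (Y *v w))"
      by (simp add: algebra_simps scaleR_matrix_vector_assoc[symmetric])
    moreover have "0 \<le> w \<bullet> (X *v w)" "0 \<le> w \<bullet> (Y *v w)" using assms(1,2) by (auto simp: psd_def)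
    ultimately show ?thesis using assms(3,4) by simp
  qed
  then show ?thesis using assms(1,2) by (auto simp: psd_def intro!: sym_add sym_scale)
qed

lemma psd_outer: "psd (outer u)"
  by (simp add: psd_def outer_sym outer_mv inner_commute)

lemma psd_zero: "psd (0::real^'n^'n)"
  by (simp add: psd_def sym_zero)

lemma psd_add: "psd X \<Longrightarrow> psd Y \<Longrightarrow> psd (X + (Y::real^'n^'n))"
  using psd_comb[of X Y 1 1] by simp

lemma psd_sum_list: "psd (sum_list (map outer us))"
  by (induction us) (auto simp: psd_zero psd_add psd_outer)

lemma frob_sum_list: "frob S (sum_list (map outer us)) = sum_list (map (\<lambda>u. u \<bullet> (S *v u)) us)"
  by (induction us) (auto simp: frob_add_right frob_outer)

lemma psd_decomp_aux:
  fixes X :: "real^'n^'n"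
  shows "psd X \<Longrightarrow> \<exists>us. X = sum_list (map outer us)"
proof (induction "rank X" arbitrary: X rule: less_induct)
  case less
  show ?case
  proof (cases "X = 0")
    case True then show ?thesis by (intro exI[of _ "[]"]) simp
  next
    case False
    have sym: "symmetric_mat X" and ps: "\<And>z. 0 \<le> z \<bullet> (X *v z)" using less.prems by (auto simp: psd_def)
    have "\<exists>w. w \<bullet> (X *v w) > 0"
    proof (rule ccontr)
      assume "\<not> ?thesis"
      then have "\<And>w. w \<bullet> (X *v w) = 0" using ps by (meson not_less order_antisym)
      then have "\<And>w. X *v w = 0" using psd_null[OF less.prems] by blast
      then have "X = 0" by (simp add: matrix_eq)
      then show False using False by simp
    qed
    then obtain w where w: "w \<bullet> (X *v w) > 0" by blast
    then have w0: "w \<noteq> 0" by auto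
    have "compact (sphere (0::real^'n) 1)" by simp
    moreover have "sphere (0::real^'n) 1 \<noteq> {}"
      using w0 by (metis norm_sgn dist_0_norm mem_sphere empty_iff)
    moreover have "continuous_on (sphere 0 1) (\<lambda>z. z \<bullet> (X *v z))"
      by (intro continuous_intros linear_continuous_on matrix_vector_mul_linear[unfolded linear_conv_bounded_linear])
    ultimately have "\<exists>v\<in>sphere 0 1. \<forall>z\<in>sphere 0 1. z \<bullet> (X *v z) \<le> v \<bullet> (X *v v)"
      by (rule continuous_attains_sup)
    then obtain v where v: "v \<in> sphere 0 1" and vmax: "\<forall>z\<in>sphere 0 1. z \<bullet> (X *v z) \<le> v \<bullet> (X *v v)"
      by blast
    define lam where "lam = v \<bullet> (X *v v)"
    have nv: "norm v = 1" using v by simp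
    then have vv: "v \<bullet> v = 1" by (simp add: norm_eq_1)
    have bound: "z \<bullet> (X *v z) \<le> lam * (z \<bullet> z)" for z
    proof (cases "z = 0")
      case True then show ?thesis by simp
    next
      case False
      define z' where "z' = (1/norm z) *\<^sub>R z"
      have "z' \<in> sphere 0 1" using False by (simp add: z'_def)
      then have "z' \<bullet> (X *v z') \<le> lam" using vmax lam_def by blast
      moreover have "z' \<bullet> (X *v z') = (z \<bullet> (X *v z)) / (z \<bullet> z)"
        using False by (simp add: z'_def matrix_vector_mult_scaleR power2_norm_eq_inner[symmetric] power2_eq_square)
      moreover have "z \<bullet> z > 0" using False by simp
      ultimately show ?thesis by (simp add: divide_le_eq)
    qed
    have lampos: "lam > 0"
    proof -
      have "w \<bullet> (X *v w) \<le> lam * (w \<bullet> w)" by (rule bound)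
      then show ?thesis using w w0 by (smt (verit) inner_ge_zero mult_nonpos_nonneg)
    qed
    define M where "M = lam *\<^sub>R mat 1 - X"
    have Mmv: "M *v z = lam *\<^sub>R z - X *v z" for z
      by (simp add: M_def algebra_simps scaleR_matrix_vector_assoc[symmetric])
    have psdM: "psd M"
      unfolding psd_def
    proof
      show "symmetric_mat M" unfolding M_def using sym
        by (intro sym_diff sym_scale) (auto simp: sym_iff mat_def)
      show "\<forall>z. 0 \<le> z \<bullet> (M *v z)" using bound by (simp add: Mmv inner_diff_right)
    qed
    have "v \<bullet> (M *v v) = 0" by (simp add: Mmv inner_diff_right vv lam_def)
    then have "M *v v = 0" using psd_null[OF psdM] by simp
    then have Xv: "X *v v = lam *\<^sub>R v" by (simp add: Mmv)
    define X' where "X' = X - lam *\<^sub>R outer v"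
    have X'mv: "X' *v z = X *v z - (lam * (v \<bullet> z)) *\<^sub>R v" for z
      by (simp add: X'_def algebra_simps scaleR_matrix_vector_assoc[symmetric] outer_mv)
    have X'v: "X' *v v = 0" by (simp add: X'mv Xv vv)
    have symX': "symmetric_mat X'" unfolding X'_def using sym outer_sym by (intro sym_diff sym_scale)
    have psdX': "psd X'"
      unfolding psd_def
    proof (intro conjI allI symX')
      fix z
      define z' where "z' = z - (v \<bullet> z) *\<^sub>R v"
      have vz': "v \<bullet> z' = 0" by (simp add: z'_def inner_diff_right vv)
      have "z \<bullet> (X' *v z) = z' \<bullet> (X' *v z')"
      proof -
        have "X' *v z = X' *v z'" by (simp add: z'_def matrix_vector_mult_diff_distrib matrix_vector_mult_scaleR X'v)
        moreover have "((v \<bullet> z) *\<^sub>R v) \<bullet> (X' *v z') = 0"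
          using sym_inner[OF symX', of v z'] X'v by (simp add: inner_commute)
        ultimately show ?thesis by (simp add: z'_def inner_diff_left)
      qed
      also have "\<dots> = z' \<bullet> (X *v z')" by (simp add: X'mv vz')
      also have "\<dots> \<ge> 0" by (rule ps)
      finally show "0 \<le> z \<bullet> (X' *v z)" .
    qed
    have sub: "col_space X' \<subseteq> col_space X"
    proof
      fix y assume "y \<in> col_space X'"
      then obtain z where "y = X' *v z" by (auto simp: col_space_def)
      then have "y = X *v (z - (v \<bullet> z) *\<^sub>R v)"
        using lampos by (simp add: X'mv matrix_vector_mult_diff_distrib matrix_vector_mult_scaleR Xv)
      then show "y \<in> col_space X" by (auto simp: col_space_def)
    qed
    have "v \<in> col_space X"
    proof -
      have "X *v ((1/lam) *\<^sub>R v) = v" using lampos by (simp add: matrix_vector_mult_scaleR Xv)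
      then show ?thesis unfolding col_space_def by (metis rangeI)
    qed
    moreover have "v \<notin> col_space X'"
    proof
      assume "v \<in> col_space X'"
      then obtain z where "v = X' *v z" by (auto simp: col_space_def)
      then have "v \<bullet> v = (X' *v v) \<bullet> z" using sym_inner[OF symX', of v z] by simp
      then show False using X'v vv by simp
    qed
    ultimately have "col_space X' \<subset> col_space X" using sub by blast
    then have "dim (col_space X') < dim (col_space X)"
      using dim_psubset by (metis span_eq_iff subspace_col)
    then have "rank X' < rank X" by (simp add: rank_dim_range col_space_def)
    then obtain us where us: "X' = sum_list (map outer us)" using less.hyps psdX' by blast
    have "X = sum_list (map outer (sqrt lam *\<^sub>R v # us))"
      using lampos by (simp add: outer_scale us[symmetric] X'_def)
    then show ?thesis by blast
  qed
qed

lemma frob_psd_nonneg: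
  assumes "psd S" "psd (X::real^'n^'n)"
  shows "0 \<le> frob S X"
proof -
  obtain us where X: "X = sum_list (map outer us)" using psd_decomp_aux assms(2) by blast
  have ps: "\<And>u. 0 \<le> u \<bullet> (S *v u)" using assms(1) by (auto simp: psd_def)
  show ?thesis unfolding X frob_sum_list
    by (induction us) (auto intro!: add_nonneg_nonneg ps)
qed

lemma frob_psd_zero:
  assumes "psd S" "psd (X::real^'n^'n)" "frob S X = 0"
  shows "S ** X = 0"
proof -
  obtain us where X: "X = sum_list (map outer us)" using psd_decomp_aux assms(2) by blast
  have ps: "\<And>u. 0 \<le> u \<bullet> (S *v u)" using assms(1) by (auto simp: psd_def)
  have "sum_list (map (\<lambda>u. u \<bullet> (S *v u)) us) = 0" using assms(3) X frob_sum_list by metis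
  then have "\<forall>u\<in>set us. u \<bullet> (S *v u) = 0"
  proof (induction us)
    case (Cons a us)
    have "0 \<le> sum_list (map (\<lambda>u. u \<bullet> (S *v u)) us)" by (rule sum_list_nonneg) (auto simp: ps)
    then show ?case using Cons ps[of a] by auto
  qed simp
  then have "\<forall>u\<in>set us. S *v u = 0" using psd_null[OF assms(1)] by blast
  then show ?thesis unfolding X
  proof (induction us)
    case Nil then show ?case by (simp add: matrix_eq matrix_vector_mul_assoc[symmetric])
  next
    case (Cons u us)
    have "S ** outer u = 0"
    proof -
      have "(S ** outer u) *v z = 0" for z
        using Cons.prems by (simp add: matrix_vector_mul_assoc[symmetric] outer_mv matrix_vector_mult_scaleR)
      then show ?thesis by (simp add: matrix_eq)
    qed
    then show ?case using Cons by (simp add: matrix_add_ldistrib)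
  qed
qed



lemma indep_coeffs:
  fixes A :: "'m::finite \<Rightarrow> real^'n^'n"
  assumes "inj A" "independent (range A)" "(\<Sum>i\<in>UNIV. c i *\<^sub>R A i) = 0"
  shows "c i = 0"
proof -
  define d where "d v = c (inv A v)" for v
  have "(\<Sum>v\<in>range A. d v *\<^sub>R v) = (\<Sum>i\<in>UNIV. d (A i) *\<^sub>R A i)"
    using assms(1) by (simp add: sum.reindex)
  also have "\<dots> = 0" using assms(1,3) by (simp add: d_def)
  finally have dz: "(\<Sum>v\<in>range A. d v *\<^sub>R v) = 0" .
  have "\<forall>c. (\<Sum>v\<in>range A. c v *\<^sub>R v) = 0 \<longrightarrow> (\<forall>v\<in>range A. c v = 0)"
    using assms(2) unfolding independent_explicit by (elim conjE)
  then have "\<forall>v\<in>range A. d v = 0" using dz by blast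
  then show ?thesis using assms(1) by (simp add: d_def)
qed

lemma frob_sumA: "frob (\<Sum>i\<in>UNIV. y$i *\<^sub>R A i) X = (\<Sum>i\<in>UNIV. y$i * frob (A i) X)"
  by (simp add: frob_sum_left frob_scale_left)

lemma pd_psd: "pd X \<Longrightarrow> psd X"
  unfolding pd_def psd_def by (metis inner_zero_left less_le order_refl)

lemma weak_id:
  assumes "X \<in> primal_feas A b" "(y, S) \<in> dual_feas C Cb A \<epsilon>"
  shows "frob (C + \<epsilon> *\<^sub>R Cb) X = b \<bullet> y + frob S X"
proof -
  have "C + \<epsilon> *\<^sub>R Cb = (\<Sum>i\<in>UNIV. y$i *\<^sub>R A i) + S" using assms(2) by (simp add: dual_feas_def)
  then have "frob (C + \<epsilon> *\<^sub>R Cb) X = (\<Sum>i\<in>UNIV. y$i * frob (A i) X) + frob S X"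
    by (simp add: frob_add_left frob_sumA)
  also have "(\<Sum>i\<in>UNIV. y$i * frob (A i) X) = b \<bullet> y"
    using assms(1) by (simp add: primal_feas_def inner_vec_def mult.commute)
  finally show ?thesis .
qed

lemma weak_dual:
  assumes "X \<in> primal_feas A b" "(y, S) \<in> dual_feas C Cb A \<epsilon>"
  shows "b \<bullet> y \<le> frob (C + \<epsilon> *\<^sub>R Cb) X"
proof -
  have "0 \<le> frob S X" using assms by (intro frob_psd_nonneg) (auto simp: primal_feas_def dual_feas_def)
  then show ?thesis using weak_id[OF assms] by simp
qed

lemma E_lower:
  assumes "\<epsilon> \<in> E_set C Cb A b" "X0 \<in> primal_feas A b"
  shows "\<exists>L. \<forall>X\<in>primal_feas A b. L \<le> frob (C + \<epsilon> *\<^sub>R Cb) X"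
proof -
  define V where "V = opt_val C Cb A b \<epsilon>"
  have low: "V \<le> ereal (frob (C + \<epsilon> *\<^sub>R Cb) X)" if "X \<in> primal_feas A b" for X
    unfolding V_def opt_val_def using that by (rule INF_lower)
  have "V > -\<infinity>" using assms(1) by (simp add: V_def E_set_def)
  moreover have "V \<noteq> \<infinity>" using low[OF assms(2)] by auto
  ultimately obtain r where "V = ereal r" by (cases V) auto
  then show ?thesis using low by auto
qed



lemma SEP:
  fixes C Cb :: "real^'n^'n" and A :: "'m::finite \<Rightarrow> real^'n^'n" and b :: "real^'m"
  assumes symC: "symmetric_mat C" and symCb: "symmetric_mat Cb"
    and symA: "\<forall>i. symmetric_mat (A i)"
    and indepA: "inj A" and indepA': "independent (range A)"
    and X0pd: "pd X0" and X0f: "\<forall>i. frob (A i) X0 = b $ i"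
    and low: "\<forall>X\<in>primal_feas A b. L \<le> frob (C + \<epsilon> *\<^sub>R Cb) X"
  shows "\<exists>y S. (y, S) \<in> dual_feas C Cb A \<epsilon> \<and> L \<le> b \<bullet> y"
proof -
  define Ce where "Ce = C + \<epsilon> *\<^sub>R Cb"
  define Aop where "Aop X = (\<chi> i. frob (A i) X)" for X :: "real^'n^'n"
  have Aop_lin: "Aop (u *\<^sub>R X + v *\<^sub>R Y) = u *\<^sub>R Aop X + v *\<^sub>R Aop Y" for u v X Y
    by (simp add: Aop_def vec_eq_iff frob_add_right frob_scale_right)
  have frob_lin: "frob Ce (u *\<^sub>R X + v *\<^sub>R Y) = u * frob Ce X + v * frob Ce Y" for u v X Y
    by (simp add: frob_add_right frob_scale_right)
  have inner_Aop: "z \<bullet> Aop X = frob (\<Sum>i\<in>UNIV. z$i *\<^sub>R A i) X" for z X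
    by (simp add: frob_sumA Aop_def inner_vec_def)
  define W :: "((real^'m) \<times> real) set" where
    "W = {(Aop X - b, frob Ce X - L + s) | X s. psd X \<and> 0 \<le> s}"
  define T :: "((real^'m) \<times> real) set" where "T = {(0, t) | t. t < 0}"
  have cW: "convex W"
  proof (rule convexI)
    fix x y :: "(real^'m) \<times> real" and u v :: real
    assume "x \<in> W" "y \<in> W" and uv': "0 \<le> u" "0 \<le> v" "u + v = 1"
    then have uv: "0 \<le> u \<and> 0 \<le> v \<and> u + v = 1" by simp
    from \<open>x \<in> W\<close> \<open>y \<in> W\<close> obtain X1 s1 X2 s2 where x: "x = (Aop X1 - b, frob Ce X1 - L + s1)" "psd X1" "0 \<le> s1"
      and y: "y = (Aop X2 - b, frob Ce X2 - L + s2)" "psd X2" "0 \<le> s2"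
      unfolding W_def by blast
    have b: "b = u *\<^sub>R b + v *\<^sub>R b" using uv by (simp add: scaleR_add_left[symmetric])
    have L: "L = u * L + v * L" using uv by (simp add: distrib_right[symmetric])
    have "u *\<^sub>R x + v *\<^sub>R y = (Aop (u *\<^sub>R X1 + v *\<^sub>R X2) - b,
              frob Ce (u *\<^sub>R X1 + v *\<^sub>R X2) - L + (u * s1 + v * s2))"
    proof -
      have v: "v = 1 - u" using uv by simp
      show ?thesis unfolding x y Aop_lin frob_lin v by (simp add: algebra_simps)
    qed
    moreover have "psd (u *\<^sub>R X1 + v *\<^sub>R X2)" using x y uv by (intro psd_comb) auto
    moreover have "0 \<le> u * s1 + v * s2" using x y uv by simp
    ultimately show "u *\<^sub>R x + v *\<^sub>R y \<in> W" unfolding W_def by blast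
  qed
  have cT: "convex T"
    unfolding T_def
  proof (rule convexI)
    fix x y :: "(real^'m) \<times> real" and u v :: real
    assume xT: "x \<in> {(0, t) |t. t < (0::real)}" and yT: "y \<in> {(0, t) |t. t < (0::real)}" and uv': "0 \<le> u" "0 \<le> v" "u + v = 1"
    then have uv: "0 \<le> u \<and> 0 \<le> v \<and> u + v = 1" by simp
    from xT yT obtain t1 t2 :: real where "x = (0, t1)" "t1 < 0" "y = (0, t2)" "t2 < 0" by blast
    moreover have "u * t1 + v * t2 < 0"
    proof (cases "u = 0")
      case True then show ?thesis using uv \<open>t2 < 0\<close> by simp
    next
      case False then have "u * t1 < 0" using uv \<open>t1 < 0\<close> by (simp add: mult_pos_neg)
      moreover have "v * t2 \<le> 0" using uv \<open>t2 < 0\<close> by (simp add: mult_nonneg_nonpos)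
      ultimately show ?thesis by simp
    qed
    ultimately show "u *\<^sub>R x + v *\<^sub>R y \<in> {(0::real^'m, t) |t. t < 0}" by simp
  qed
  have neW: "W \<noteq> {}" unfolding W_def using psd_zero by blast
  have neT: "T \<noteq> {}" unfolding T_def by (intro ex_in_conv[THEN iffD1] exI[of _ "(0, -1)"]) auto
  have dis: "W \<inter> T = {}"
  proof (rule ccontr)
    assume "W \<inter> T \<noteq> {}"
    then obtain X s t where "psd X" "0 \<le> s" "Aop X - b = 0" "frob Ce X - L + s = t" "t < 0"
      unfolding W_def T_def by blast
    moreover have "X \<in> primal_feas A b"
      using \<open>psd X\<close> \<open>Aop X - b = 0\<close> by (auto simp: primal_feas_def psd_def Aop_def vec_eq_iff)
    ultimately show False using low by (auto simp: Ce_def)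
  qed
  obtain a \<beta> where a0: "a \<noteq> 0" and aW: "\<forall>x\<in>W. a \<bullet> x \<le> \<beta>" and aT: "\<forall>x\<in>T. \<beta> \<le> a \<bullet> x"
    using separating_hyperplane_sets[OF cW cT neW neT dis] by blast
  obtain a1 a0 where a: "a = (a1, a0)" by (cases a)
  have Tt: "\<beta> \<le> a0 * t" if "t < 0" for t
    using aT that unfolding T_def a by auto
  have a0le: "a0 \<le> 0"
  proof (rule ccontr)
    assume "\<not> a0 \<le> 0"
    then have "\<beta> \<le> a0 * (-(\<bar>\<beta>\<bar>+1)/a0)" by (intro Tt) (simp add: divide_neg_pos)
    then show False using \<open>\<not> a0 \<le> 0\<close> by simp
  qed
  have bele: "\<beta> \<le> 0"
  proof (rule ccontr)
    assume bp: "\<not> \<beta> \<le> 0"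
    show False
    proof (cases "a0 = 0")
      case True then show False using Tt[of "-1"] bp by simp
    next
      case False
      then have "a0 < 0" using a0le by simp
      then have "\<beta> \<le> a0 * (\<beta>/(2*a0))" using bp by (intro Tt) (simp add: divide_pos_neg)
      then show False using \<open>a0 < 0\<close> bp by simp
    qed
  qed
  define Z where "Z = (\<Sum>i\<in>UNIV. a1$i *\<^sub>R A i)"
  have bZ: "a1 \<bullet> b = frob Z X0"
  proof -
    have "Aop X0 = b" using X0f by (simp add: Aop_def vec_eq_iff)
    then show ?thesis using inner_Aop[of a1 X0] by (simp add: Z_def)
  qed
  have Wkey: "frob Z X - frob Z X0 + a0 * (frob Ce X - L) \<le> 0" if "psd X" for X
  proof -
    have "(Aop X - b, frob Ce X - L + 0) \<in> W" unfolding W_def using that by blast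
    then have "a \<bullet> (Aop X - b, frob Ce X - L + 0) \<le> \<beta>" using aW by blast
    then show ?thesis using bele by (simp add: a inner_diff_right inner_Aop Z_def[symmetric] bZ)
  qed
  show ?thesis
  proof (cases "a0 = 0")
    case True
    have ZX: "frob Z X \<le> frob Z X0" if "psd X" for X using Wkey[OF that] True by simp
    have psdX0: "psd X0" using X0pd pd_psd by blast
    have "frob Z X0 \<ge> 0" using ZX[OF psd_zero] by simp
    moreover have "2 * frob Z X0 \<le> frob Z X0"
    proof -
      have "psd (2 *\<^sub>R X0)" using psd_comb[OF psdX0 psdX0, of 2 0] by simp
      then have "frob Z (2 *\<^sub>R X0) \<le> frob Z X0" by (rule ZX)
      then show ?thesis by (simp add: frob_scale_right)
    qed
    ultimately have Z0: "frob Z X0 = 0" by simp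
    have symZ: "symmetric_mat Z" unfolding Z_def using symA by (intro sym_sum sym_scale) auto
    have psdmZ: "psd (-Z)"
      unfolding psd_def
    proof (intro conjI allI)
      show "symmetric_mat (-Z)" using symZ by (simp add: sym_iff)
      fix w
      have "frob Z (outer w) \<le> 0" using ZX[OF psd_outer] Z0 by simp
      then show "0 \<le> w \<bullet> (- Z *v w)"
        using frob_outer[of Z w] by (simp add: matrix_vector_mult_def inner_vec_def sum_negf vec_eq_iff)
    qed
    have "frob X0 (-Z) = 0" using Z0 frob_comm[of X0 "-Z"] frob_scale_left[of "-1" Z X0] by simp
    then have prod0: "X0 ** (-Z) = 0" using frob_psd_zero[OF psdX0 psdmZ] by simp
    have "(-Z) *v w = 0" for w
    proof (rule ccontr)
      assume ne: "(-Z) *v w \<noteq> 0"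
      have "X0 *v ((-Z) *v w) = 0" using prod0 by (simp add: matrix_vector_mul_assoc)
      then have "((-Z) *v w) \<bullet> (X0 *v ((-Z) *v w)) = 0" by simp
      then show False using X0pd ne by (auto simp: pd_def)
    qed
    then have "-Z = 0" by (simp add: matrix_eq)
    then have "Z = 0" by simp
    then have "\<And>i. a1$i = 0" using indep_coeffs[OF indepA indepA', of "\<lambda>i. a1$i"] by (simp add: Z_def)
    then have "a1 = 0" by (simp add: vec_eq_iff)
    then show ?thesis using a0 True a by (simp add: zero_prod_def)
  next
    case False
    then have cpos: "-a0 > 0" using a0le by simp
    define c where "c = -a0"
    define y where "y = (1/c) *\<^sub>R a1"
    define S where "S = Ce - (\<Sum>i\<in>UNIV. y$i *\<^sub>R A i)"
    have ZY: "(\<Sum>i\<in>UNIV. y$i *\<^sub>R A i) = (1/c) *\<^sub>R Z"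
      by (simp add: y_def Z_def scaleR_sum_right)
    have by': "b \<bullet> y = (1/c) * frob Z X0" by (simp add: y_def bZ inner_commute)
    have Skey: "L - b \<bullet> y \<le> frob S X" if "psd X" for X
    proof -
      have "frob Z X - frob Z X0 - c * (frob Ce X - L) \<le> 0" using Wkey[OF that] by (simp add: c_def)
      then have "(1/c) * (frob Z X - frob Z X0) \<le> frob Ce X - L"
        using cpos unfolding c_def by (simp add: field_simps)
      then show ?thesis
        by (simp add: S_def frob_diff_left ZY frob_scale_left by' algebra_simps)
    qed
    have Lb: "L \<le> b \<bullet> y" using Skey[OF psd_zero] by simp
    have symS: "symmetric_mat S" unfolding S_def Ce_def using symA symC symCb
      by (intro sym_diff sym_add sym_scale sym_sum) auto
    have psdS: "psd S"
      unfolding psd_def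
    proof (intro conjI allI symS)
      fix w
      show "0 \<le> w \<bullet> (S *v w)"
      proof (rule ccontr)
        assume neg: "\<not> 0 \<le> w \<bullet> (S *v w)"
        define q where "q = w \<bullet> (S *v w)"
        define k where "k = (\<bar>L - b \<bullet> y\<bar> + 1) / (-q)"
        have kpos: "k \<ge> 0" using neg unfolding k_def q_def by (intro divide_nonneg_pos) auto
        have "psd (k *\<^sub>R outer w)" using psd_comb[OF psd_outer psd_zero, of k 0 w] kpos by simp
        then have "L - b \<bullet> y \<le> frob S (k *\<^sub>R outer w)" by (rule Skey)
        also have "\<dots> = k * q" by (simp add: frob_scale_right frob_outer q_def)
        also have "\<dots> = -(\<bar>L - b \<bullet> y\<bar> + 1)" using neg by (simp add: k_def q_def)
        finally show False by simp
      qed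
    qed
    have "(y, S) \<in> dual_feas C Cb A \<epsilon>"
      using psdS by (simp add: dual_feas_def S_def Ce_def)
    then show ?thesis using Lb by blast
  qed
qed



lemma cont_entry: "continuous_on S (\<lambda>X::real^'n^'n. X$i$j)"
  by (intro continuous_intros)

lemma cont_frob: "continuous_on S (\<lambda>X::real^'n^'n. frob M X)"
  unfolding frob_expand by (intro continuous_intros)

lemma cont_qf: "continuous_on S (\<lambda>X::real^'n^'n. v \<bullet> (X *v v))"
  unfolding qf_expand by (intro continuous_intros)

lemma closed_primal_feas: "closed (primal_feas A b)"
proof -
  have "primal_feas A b = (\<Inter>i. \<Inter>j. {X. X$i$j = X$j$i}) \<inter> (\<Inter>v. {X. 0 \<le> v \<bullet> (X *v v)})
          \<inter> (\<Inter>i. {X. frob (A i) X = b$i})"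
    by (auto simp: primal_feas_def psd_def sym_iff)
  moreover have "closed \<dots>"
    by (intro closed_Int closed_INT ballI closed_Collect_eq closed_Collect_le cont_entry cont_frob cont_qf continuous_on_const)
  ultimately show ?thesis by simp
qed

lemma pd_min:
  assumes "pd (S::real^'n^'n)"
  shows "\<exists>\<mu>>0. \<forall>w. \<mu> * (w \<bullet> w) \<le> w \<bullet> (S *v w)"
proof -
  have "compact (sphere (0::real^'n) 1)" by simp
  moreover have "sphere (0::real^'n) 1 \<noteq> {}"
  proof -
    have "(axis undefined 1 :: real^'n) \<in> sphere 0 1" by simp
    then show ?thesis by blast
  qed
  moreover have "continuous_on (sphere 0 1) (\<lambda>z. z \<bullet> (S *v z))"
    by (intro continuous_intros linear_continuous_on matrix_vector_mul_linear[unfolded linear_conv_bounded_linear])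
  ultimately have "\<exists>v\<in>sphere 0 1. \<forall>z\<in>sphere 0 1. v \<bullet> (S *v v) \<le> z \<bullet> (S *v z)"
    by (rule continuous_attains_inf)
  then obtain v where v: "v \<in> sphere 0 1" and vmin: "\<forall>z\<in>sphere 0 1. v \<bullet> (S *v v) \<le> z \<bullet> (S *v z)"
    by blast
  define \<mu> where "\<mu> = v \<bullet> (S *v v)"
  have "v \<noteq> 0" using v by auto
  then have mp: "\<mu> > 0" using assms by (simp add: pd_def \<mu>_def)
  have "\<mu> * (z \<bullet> z) \<le> z \<bullet> (S *v z)" for z
  proof (cases "z = 0")
    case True then show ?thesis by simp
  next
    case False
    define z' where "z' = (1/norm z) *\<^sub>R z"
    have "z' \<in> sphere 0 1" using False by (simp add: z'_def)
    then have "\<mu> \<le> z' \<bullet> (S *v z')" using vmin \<mu>_def by blast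
    moreover have "z' \<bullet> (S *v z') = (z \<bullet> (S *v z)) / (z \<bullet> z)"
      using False by (simp add: z'_def matrix_vector_mult_scaleR power2_norm_eq_inner[symmetric] power2_eq_square)
    moreover have "z \<bullet> z > 0" using False by simp
    ultimately show ?thesis by (simp add: le_divide_eq)
  qed
  then show ?thesis using mp by blast
qed

lemma outer_entry: "(sum_list (map outer us))$i$k = sum_list (map (\<lambda>u. u$i * u$k) us)"
  by (induction us) (auto simp: outer_def)

lemma entry_bound: "\<bar>sum_list (map (\<lambda>u. u$i * u$k) us)\<bar> \<le> sum_list (map (\<lambda>u. u \<bullet> (u::real^'n)) us)"
proof (induction us)
  case (Cons u us)
  have "\<bar>u$i * u$k\<bar> \<le> norm u * norm u"
    unfolding abs_mult by (intro mult_mono component_le_norm_cart) auto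
  also have "\<dots> = u \<bullet> u" by (simp add: power2_norm_eq_inner[symmetric] power2_eq_square)
  finally show ?case using Cons by (simp add: abs_triangle_ineq order_trans[OF abs_triangle_ineq])
qed simp

lemma mu_bound: "(\<And>w. \<mu> * (w \<bullet> w) \<le> w \<bullet> (S *v w)) \<Longrightarrow>
   \<mu> * sum_list (map (\<lambda>u. u \<bullet> (u::real^'n)) us) \<le> sum_list (map (\<lambda>u. u \<bullet> (S *v u)) us)"
  by (induction us) (auto simp: distrib_left add_mono)

lemma ATT:
  fixes C Cb :: "real^'n^'n" and A :: "'m::finite \<Rightarrow> real^'n^'n" and b :: "real^'m"
  assumes X0: "X0 \<in> primal_feas A b"
    and ds: "pd S1" "(\<Sum>i\<in>UNIV. y1 $ i *\<^sub>R A i) + S1 = C + \<epsilon> *\<^sub>R Cb"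
  shows "primal_opt C Cb A b \<epsilon> \<noteq> {}"
proof -
  define f where "f X = frob (C + \<epsilon> *\<^sub>R Cb) X" for X
  define F where "F = primal_feas A b"
  define K where "K = {X \<in> F. f X \<le> f X0}"
  have dfe: "(y1, S1) \<in> dual_feas C Cb A \<epsilon>" using ds pd_psd by (auto simp: dual_feas_def)
  obtain \<mu> where mp: "\<mu> > 0" and mb: "\<And>w. \<mu> * (w \<bullet> w) \<le> w \<bullet> (S1 *v w)" using pd_min[OF ds(1)] by blast
  define R where "R = (f X0 - b \<bullet> y1) / \<mu>"
  have ent: "\<bar>X$i$k\<bar> \<le> R" if "X \<in> K" for X i k
  proof -
    have XF: "X \<in> F" and fX: "f X \<le> f X0" using that by (auto simp: K_def)
    then have "psd X" by (simp add: F_def primal_feas_def)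
    then obtain us where us: "X = sum_list (map outer us)" using psd_decomp_aux by blast
    have "f X = b \<bullet> y1 + frob S1 X" using weak_id[OF XF[unfolded F_def] dfe] by (simp add: f_def)
    then have "frob S1 X \<le> f X0 - b \<bullet> y1" using fX by simp
    then have "\<mu> * sum_list (map (\<lambda>u. u \<bullet> u) us) \<le> f X0 - b \<bullet> y1"
      using mu_bound[OF mb, of us] us frob_sum_list[of S1 us] by simp
    then have "sum_list (map (\<lambda>u. u \<bullet> u) us) \<le> R" using mp by (simp add: R_def le_divide_eq mult.commute)
    then show ?thesis using entry_bound[of i k us] outer_entry[of us i k] us by simp
  qed
  have "bounded K"
    unfolding bounded_iff
  proof (intro exI ballI)
    fix X assume XK: "X \<in> K"
    have "norm X \<le> (\<Sum>i\<in>UNIV. norm (X$i))" unfolding norm_vec_def by (rule L2_set_le_sum) simp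
    also have "\<dots> \<le> (\<Sum>i\<in>(UNIV::'n set). \<Sum>k\<in>(UNIV::'n set). R)"
    proof (rule sum_mono)
      fix i
      have "norm (X$i) \<le> (\<Sum>k\<in>UNIV. \<bar>X$i$k\<bar>)" by (rule norm_le_l1_cart)
      also have "\<dots> \<le> (\<Sum>k\<in>(UNIV::'n set). R)" using ent[OF XK] by (intro sum_mono) auto
      finally show "norm (X$i) \<le> (\<Sum>k\<in>(UNIV::'n set). R)" .
    qed
    finally show "norm X \<le> (\<Sum>i\<in>(UNIV::'n set). \<Sum>k\<in>(UNIV::'n set). R)" .
  qed
  moreover have "closed K"
  proof -
    have "K = F \<inter> {X. f X \<le> f X0}" by (auto simp: K_def)
    moreover have "closed {X. f X \<le> f X0}"
      unfolding f_def by (intro closed_Collect_le cont_frob continuous_on_const)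
    ultimately show ?thesis using closed_primal_feas by (auto simp: F_def)
  qed
  ultimately have "compact K" by (simp add: compact_eq_bounded_closed)
  moreover have "K \<noteq> {}" using X0 by (auto simp: K_def F_def)
  moreover have "continuous_on K f" unfolding f_def by (rule cont_frob)
  ultimately have "\<exists>Xs\<in>K. \<forall>Y\<in>K. f Xs \<le> f Y" by (rule continuous_attains_inf)
  then obtain Xs where Xs: "Xs \<in> K" "\<And>Y. Y \<in> K \<Longrightarrow> f Xs \<le> f Y" by blast
  have "Xs \<in> primal_opt C Cb A b \<epsilon>"
    unfolding primal_opt_def
  proof (intro CollectI conjI ballI)
    show "Xs \<in> primal_feas A b" using Xs by (auto simp: K_def F_def)
    fix X' assume "X' \<in> primal_feas A b"
    show "frob (C + \<epsilon> *\<^sub>R Cb) Xs \<le> frob (C + \<epsilon> *\<^sub>R Cb) X'"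
    proof (cases "f X' \<le> f X0")
      case True then show ?thesis using Xs \<open>X' \<in> primal_feas A b\<close> by (auto simp: K_def F_def f_def)
    next
      case False then show ?thesis using Xs(1) by (auto simp: K_def f_def)
    qed
  qed
  then show ?thesis by blast
qed



lemma sumA_comb: "(\<Sum>i\<in>UNIV. (u *\<^sub>R y + v *\<^sub>R y') $ i *\<^sub>R (A i::real^'n^'n)) =
   u *\<^sub>R (\<Sum>i\<in>UNIV. y$i *\<^sub>R A i) + v *\<^sub>R (\<Sum>i\<in>UNIV. y'$i *\<^sub>R A i)"
proof -
  have "(\<Sum>i\<in>UNIV. (u *\<^sub>R y + v *\<^sub>R y') $ i *\<^sub>R (A i::real^'n^'n)) =
     (\<Sum>i\<in>UNIV. u *\<^sub>R (y$i *\<^sub>R A i) + v *\<^sub>R (y'$i *\<^sub>R A i))"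
    by (simp add: scaleR_add_left)
  also have "\<dots> = (\<Sum>i\<in>UNIV. u *\<^sub>R (y$i *\<^sub>R A i)) + (\<Sum>i\<in>UNIV. v *\<^sub>R (y'$i *\<^sub>R A i))"
    by (rule sum.distrib)
  also have "\<dots> = u *\<^sub>R (\<Sum>i\<in>UNIV. y$i *\<^sub>R A i) + v *\<^sub>R (\<Sum>i\<in>UNIV. y'$i *\<^sub>R A i)"
    by (simp only: scaleR_sum_right)
  finally show ?thesis .
qed

lemma dual_feas_comb:
  assumes "(y, S) \<in> dual_feas C Cb A e1" "(y', S') \<in> dual_feas C Cb A e2" "0 \<le> u" "0 \<le> v" "u + v = 1"
  shows "(u *\<^sub>R y + v *\<^sub>R y', u *\<^sub>R S + v *\<^sub>R S') \<in> dual_feas C Cb A (u * e1 + v * e2)"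
proof -
  have e1: "(\<Sum>i\<in>UNIV. y$i *\<^sub>R A i) + S = C + e1 *\<^sub>R Cb" and e2: "(\<Sum>i\<in>UNIV. y'$i *\<^sub>R A i) + S' = C + e2 *\<^sub>R Cb"
    using assms by (auto simp: dual_feas_def)
  have "(\<Sum>i\<in>UNIV. (u *\<^sub>R y + v *\<^sub>R y') $ i *\<^sub>R A i) + (u *\<^sub>R S + v *\<^sub>R S')
       = u *\<^sub>R ((\<Sum>i\<in>UNIV. y$i *\<^sub>R A i) + S) + v *\<^sub>R ((\<Sum>i\<in>UNIV. y'$i *\<^sub>R A i) + S')"
    unfolding sumA_comb by (simp add: algebra_simps)
  also have "\<dots> = (u + v) *\<^sub>R C + (u * e1 + v * e2) *\<^sub>R Cb" unfolding e1 e2 by (simp add: algebra_simps)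
  finally show ?thesis using assms psd_comb by (auto simp: dual_feas_def)
qed

lemma DS:
  fixes C Cb :: "real^'n^'n" and A :: "'m::finite \<Rightarrow> real^'n^'n" and b :: "real^'m"
  assumes symC: "symmetric_mat C" and symCb: "symmetric_mat Cb"
    and symA: "\<forall>i. symmetric_mat (A i)"
    and indepA: "inj A" and indepA': "independent (range A)"
    and primal_slater: "\<exists>X. pd X \<and> (\<forall>i. frob (A i) X = b $ i)"
    and dual_slater: "\<exists>y S. pd S \<and> (\<Sum>i\<in>UNIV. y $ i *\<^sub>R A i) + S = C"
    and eps: "\<epsilon> \<in> interior (E_set C Cb A b)"
  shows "\<exists>y S. pd S \<and> (\<Sum>i\<in>UNIV. y $ i *\<^sub>R A i) + S = C + \<epsilon> *\<^sub>R Cb"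
proof -
  obtain X0 where X0: "pd X0" "\<forall>i. frob (A i) X0 = b $ i" using primal_slater by blast
  have X0f: "X0 \<in> primal_feas A b" using X0 pd_psd by (auto simp: primal_feas_def psd_def)
  obtain y0 S0 where S0: "pd S0" "(\<Sum>i\<in>UNIV. y0 $ i *\<^sub>R A i) + S0 = C" using dual_slater by blast
  show ?thesis
  proof (cases "\<epsilon> = 0")
    case True then show ?thesis using S0 by auto
  next
    case False
    obtain \<delta> where dp: "\<delta> > 0" and ball: "ball \<epsilon> \<delta> \<subseteq> E_set C Cb A b"
      using eps by (meson mem_interior)
    define e' where "e' = \<epsilon> + (\<delta>/2) * sgn \<epsilon>"
    have "dist \<epsilon> e' < \<delta>" using dp False by (simp add: e'_def dist_real_def abs_mult abs_sgn_eq)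
    then have "e' \<in> E_set C Cb A b" using ball by auto
    then obtain L where "\<forall>X\<in>primal_feas A b. L \<le> frob (C + e' *\<^sub>R Cb) X" using E_lower X0f by blast
    then obtain y' S' where yS': "(y', S') \<in> dual_feas C Cb A e'"
      using SEP[OF symC symCb symA indepA indepA' X0] by blast
    define lam where "lam = (\<delta>/2) / (\<bar>\<epsilon>\<bar> + \<delta>/2)"
    have lam: "0 < lam" "lam < 1" using dp False by (auto simp: lam_def field_simps)
    have d0: "(y0, S0) \<in> dual_feas C Cb A 0" using S0 pd_psd by (auto simp: dual_feas_def)
    have "(lam *\<^sub>R y0 + (1-lam) *\<^sub>R y', lam *\<^sub>R S0 + (1-lam) *\<^sub>R S') \<in> dual_feas C Cb A (lam * 0 + (1-lam) * e')"
      using lam by (intro dual_feas_comb[OF d0 yS']) auto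
    moreover have "lam * 0 + (1-lam) * e' = \<epsilon>"
    proof -
      have "\<bar>\<epsilon>\<bar> + \<delta>/2 > 0" using dp by simp
      then show ?thesis using False dp unfolding lam_def e'_def
        by (cases "\<epsilon> > 0") (auto simp: field_simps sgn_if)
    qed
    ultimately have df: "(lam *\<^sub>R y0 + (1-lam) *\<^sub>R y', lam *\<^sub>R S0 + (1-lam) *\<^sub>R S') \<in> dual_feas C Cb A \<epsilon>" by simp
    have "pd (lam *\<^sub>R S0 + (1-lam) *\<^sub>R S')"
    proof -
      have sym: "symmetric_mat (lam *\<^sub>R S0 + (1-lam) *\<^sub>R S')"
        using S0 yS' by (intro sym_add sym_scale) (auto simp: pd_def psd_def dual_feas_def)
      have "0 < w \<bullet> ((lam *\<^sub>R S0 + (1-lam) *\<^sub>R S') *v w)" if "w \<noteq> 0" for w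
      proof -
        have "w \<bullet> ((lam *\<^sub>R S0 + (1-lam) *\<^sub>R S') *v w) = lam * (w \<bullet> (S0 *v w)) + (1-lam) * (w \<bullet> (S' *v w))"
          by (simp add: algebra_simps scaleR_matrix_vector_assoc[symmetric])
        moreover have "0 < w \<bullet> (S0 *v w)" using S0 that by (auto simp: pd_def)
        moreover have "0 \<le> w \<bullet> (S' *v w)" using yS' by (auto simp: dual_feas_def psd_def)
        ultimately show ?thesis using lam by (smt (verit) mult_nonneg_nonneg mult_pos_pos)
      qed
      then show ?thesis using sym by (simp add: pd_def)
    qed
    then show ?thesis using df unfolding dual_feas_def by blast
  qed
qed



lemma SD:
  fixes C Cb :: "real^'n^'n" and A :: "'m::finite \<Rightarrow> real^'n^'n" and b :: "real^'m"
  assumes symC: "symmetric_mat C" and symCb: "symmetric_mat Cb"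
    and symA: "\<forall>i. symmetric_mat (A i)"
    and indepA: "inj A" and indepA': "independent (range A)"
    and primal_slater: "\<exists>X. pd X \<and> (\<forall>i. frob (A i) X = b $ i)"
    and dual_slater: "\<exists>y S. pd S \<and> (\<Sum>i\<in>UNIV. y $ i *\<^sub>R A i) + S = C"
    and eps: "\<epsilon> \<in> interior (E_set C Cb A b)"
  shows "primal_opt C Cb A b \<epsilon> \<noteq> {}" "dual_opt C Cb A b \<epsilon> \<noteq> {}"
    "\<And>X y S. X \<in> primal_opt C Cb A b \<epsilon> \<Longrightarrow> (y, S) \<in> dual_opt C Cb A b \<epsilon> \<Longrightarrow> frob S X = 0"
proof -
  obtain X0 where X0: "pd X0" "\<forall>i. frob (A i) X0 = b $ i" using primal_slater by blast
  have X0f: "X0 \<in> primal_feas A b" using X0 pd_psd by (auto simp: primal_feas_def psd_def)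
  obtain y1 S1 where "pd S1" "(\<Sum>i\<in>UNIV. y1 $ i *\<^sub>R A i) + S1 = C + \<epsilon> *\<^sub>R Cb"
    using DS[OF assms] by blast
  then show ne: "primal_opt C Cb A b \<epsilon> \<noteq> {}" using ATT[OF X0f] by blast
  then obtain Xs where Xs: "Xs \<in> primal_opt C Cb A b \<epsilon>" by blast
  then have Xsf: "Xs \<in> primal_feas A b" and Xsm: "\<forall>X'\<in>primal_feas A b. frob (C + \<epsilon> *\<^sub>R Cb) Xs \<le> frob (C + \<epsilon> *\<^sub>R Cb) X'"
    by (auto simp: primal_opt_def)
  obtain y S where yS: "(y, S) \<in> dual_feas C Cb A \<epsilon>" and ge: "frob (C + \<epsilon> *\<^sub>R Cb) Xs \<le> b \<bullet> y"
    using SEP[OF symC symCb symA indepA indepA' X0 Xsm] by blast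
  have yopt: "(y, S) \<in> dual_opt C Cb A b \<epsilon>"
    unfolding dual_opt_def using yS ge weak_dual[OF Xsf] by fastforce
  then show "dual_opt C Cb A b \<epsilon> \<noteq> {}" by blast
  fix X y' S'
  assume X: "X \<in> primal_opt C Cb A b \<epsilon>" and d: "(y', S') \<in> dual_opt C Cb A b \<epsilon>"
  have Xf: "X \<in> primal_feas A b" using X by (simp add: primal_opt_def)
  have "frob (C + \<epsilon> *\<^sub>R Cb) X \<le> frob (C + \<epsilon> *\<^sub>R Cb) Xs" using X Xsf by (auto simp: primal_opt_def)
  moreover have "b \<bullet> y \<le> b \<bullet> y'" using d yS by (auto simp: dual_opt_def)
  moreover have d': "(y', S') \<in> dual_feas C Cb A \<epsilon>" using d by (simp add: dual_opt_def)
  moreover have "0 \<le> frob S' X" using d' Xf by (intro frob_psd_nonneg) (auto simp: dual_feas_def primal_feas_def)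
  ultimately show "frob S' X = 0" using weak_id[OF Xf d'] ge by linarith
qed

lemma convex_primal_opt: "convex (primal_opt C Cb A b \<epsilon>)"
proof (rule convexI)
  fix X Y and u v :: real
  assume X: "X \<in> primal_opt C Cb A b \<epsilon>" and Y: "Y \<in> primal_opt C Cb A b \<epsilon>" and uv: "0 \<le> u" "0 \<le> v" "u + v = 1"
  let ?f = "frob (C + \<epsilon> *\<^sub>R Cb)"
  have psd: "psd (u *\<^sub>R X + v *\<^sub>R Y)" using X Y uv by (intro psd_comb) (auto simp: primal_opt_def primal_feas_def)
  have con: "frob (A i) (u *\<^sub>R X + v *\<^sub>R Y) = b$i" for i
  proof -
    have "frob (A i) (u *\<^sub>R X + v *\<^sub>R Y) = u * b$i + v * b$i" using X Y
      by (auto simp: frob_add_right frob_scale_right primal_opt_def primal_feas_def)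
    also have "\<dots> = b$i" using uv by (simp add: distrib_right[symmetric])
    finally show ?thesis .
  qed
  have opt: "?f (u *\<^sub>R X + v *\<^sub>R Y) \<le> ?f X'" if "X' \<in> primal_feas A b" for X'
  proof -
    have "?f X \<le> ?f X'" "?f Y \<le> ?f X'" using X Y that by (auto simp: primal_opt_def)
    then have "u * ?f X + v * ?f Y \<le> u * ?f X' + v * ?f X'" using uv by (intro add_mono mult_left_mono) auto
    then show ?thesis using uv by (simp add: frob_add_right frob_scale_right distrib_right[symmetric])
  qed
  show "u *\<^sub>R X + v *\<^sub>R Y \<in> primal_opt C Cb A b \<epsilon>"
    using psd con opt by (auto simp: primal_opt_def primal_feas_def psd_def)
qed

lemma convex_dual_opt: "convex (dual_opt C Cb A b \<epsilon>)"
proof (rule convexI)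
  fix p q and u v :: real
  assume p: "p \<in> dual_opt C Cb A b \<epsilon>" and q: "q \<in> dual_opt C Cb A b \<epsilon>" and uv: "0 \<le> u" "0 \<le> v" "u + v = 1"
  obtain y S y' S' where pq: "p = (y, S)" "q = (y', S')" by (cases p, cases q)
  have "(u *\<^sub>R y + v *\<^sub>R y', u *\<^sub>R S + v *\<^sub>R S') \<in> dual_feas C Cb A (u * \<epsilon> + v * \<epsilon>)"
    using p q uv pq by (intro dual_feas_comb) (auto simp: dual_opt_def)
  moreover have "u * \<epsilon> + v * \<epsilon> = \<epsilon>" using uv by (simp add: distrib_right[symmetric])
  moreover have "b \<bullet> y'' \<le> b \<bullet> (u *\<^sub>R y + v *\<^sub>R y')" if "(y'', S'') \<in> dual_feas C Cb A \<epsilon>" for y'' S''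
  proof -
    have "b \<bullet> y'' \<le> b \<bullet> y" "b \<bullet> y'' \<le> b \<bullet> y'" using p q pq that by (auto simp: dual_opt_def)
    then have "u * (b \<bullet> y'') + v * (b \<bullet> y'') \<le> u * (b \<bullet> y) + v * (b \<bullet> y')" using uv by (intro add_mono mult_left_mono) auto
    then show ?thesis using uv by (simp add: inner_add_right distrib_right[symmetric])
  qed
  ultimately show "u *\<^sub>R p + v *\<^sub>R q \<in> dual_opt C Cb A b \<epsilon>"
    unfolding pq dual_opt_def by auto
qed

lemma ri_prolong:
  fixes x :: "'a::euclidean_space"
  assumes "x \<in> rel_interior K" "x' \<in> K"
  shows "\<exists>t>0. x + t *\<^sub>R (x - x') \<in> K"
proof (cases "x = x'")
  case True then show ?thesis using assms(2) by (intro exI[of _ 1]) auto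
next
  case False
  obtain e where e: "e > 0" "ball x e \<inter> affine hull K \<subseteq> K" and xK: "x \<in> K"
    using assms(1) mem_rel_interior_ball by blast
  define t where "t = e / (2 * norm (x - x'))"
  have np: "norm (x - x') > 0" using False by simp
  have tp: "t > 0" using e np by (simp add: t_def)
  have "dist x (x + t *\<^sub>R (x - x')) = t * norm (x - x')" using tp by (simp add: dist_norm)
  also have "\<dots> = e/2" using np by (simp add: t_def)
  finally have "x + t *\<^sub>R (x - x') \<in> ball x e" using e by simp
  moreover have "x + t *\<^sub>R (x - x') \<in> affine hull K"
  proof -
    have "(1 + t) *\<^sub>R x + (-t) *\<^sub>R x' \<in> affine hull K"
      using xK assms(2) by (intro mem_affine[OF affine_affine_hull]) (auto intro: hull_inc)
    moreover have "(1 + t) *\<^sub>R x + (-t) *\<^sub>R x' = x + t *\<^sub>R (x - x')" by (simp add: algebra_simps)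
    ultimately show ?thesis by simp
  qed
  ultimately show ?thesis using e tp by blast
qed

lemma psd_prolong_col:
  assumes "psd X" "psd Y" "psd (X + t *\<^sub>R (X - Y))" "t > 0"
  shows "col_space (Y::real^'n^'n) \<subseteq> col_space X"
proof (rule col_mono)
  show "symmetric_mat X" "symmetric_mat Y" using assms by (auto simp: psd_def)
  fix w assume Xw: "X *v w = 0"
  have "0 \<le> w \<bullet> ((X + t *\<^sub>R (X - Y)) *v w)" using assms(3) by (simp add: psd_def)
  also have "\<dots> = - t * (w \<bullet> (Y *v w))"
    by (simp add: algebra_simps scaleR_matrix_vector_assoc[symmetric] Xw)
  finally have "w \<bullet> (Y *v w) \<le> 0" using assms(4) by (simp add: mult_le_0_iff)
  moreover have "0 \<le> w \<bullet> (Y *v w)" using assms(2) by (simp add: psd_def)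
  ultimately show "Y *v w = 0" using psd_null[OF assms(2)] by simp
qed

lemma primal_range:
  assumes "X \<in> rel_interior (primal_opt C Cb A b \<epsilon>)" "Y \<in> primal_opt C Cb A b \<epsilon>"
  shows "col_space Y \<subseteq> col_space X"
proof -
  obtain t where "t > 0" "X + t *\<^sub>R (X - Y) \<in> primal_opt C Cb A b \<epsilon>" using ri_prolong[OF assms] by blast
  moreover have "X \<in> primal_opt C Cb A b \<epsilon>" using assms(1) rel_interior_subset by blast
  ultimately show ?thesis using assms(2) by (intro psd_prolong_col[of X Y t]) (auto simp: primal_opt_def primal_feas_def)
qed

lemma dual_range:
  assumes "(y, S) \<in> rel_interior (dual_opt C Cb A b \<epsilon>)" "(y', S') \<in> dual_opt C Cb A b \<epsilon>"
  shows "col_space S' \<subseteq> col_space S"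
proof -
  obtain t where "t > 0" "(y, S) + t *\<^sub>R ((y, S) - (y', S')) \<in> dual_opt C Cb A b \<epsilon>" using ri_prolong[OF assms] by blast
  moreover have "(y, S) \<in> dual_opt C Cb A b \<epsilon>" using assms(1) rel_interior_subset by blast
  ultimately show ?thesis using assms(2) by (intro psd_prolong_col[of S S' t]) (auto simp: dual_opt_def dual_feas_def)
qed

lemma max_compl_ex:
  fixes C Cb :: "real^'n^'n" and A :: "'m::finite \<Rightarrow> real^'n^'n" and b :: "real^'m"
  assumes "primal_opt C Cb A b \<epsilon> \<noteq> {}" "dual_opt C Cb A b \<epsilon> \<noteq> {}"
  shows "\<exists>X y S. max_compl C Cb A b \<epsilon> X y S"
proof -
  obtain X where "X \<in> rel_interior (primal_opt C Cb A b \<epsilon>)"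
    using assms(1) rel_interior_eq_empty[OF convex_primal_opt] by blast
  moreover obtain p where "p \<in> rel_interior (dual_opt C Cb A b \<epsilon>)"
    using assms(2) rel_interior_eq_empty[OF convex_dual_opt] by blast
  ultimately show ?thesis unfolding max_compl_def by (cases p) blast
qed

lemma opt_partition_eq:
  assumes "max_compl C Cb A b \<epsilon> X y S"
  shows "opt_partition C Cb A b \<epsilon> = (col_space X,
        orthogonal_comp {u + v | u v. u \<in> col_space X \<and> v \<in> col_space S}, col_space S)"
proof -
  define Q where "Q = (\<lambda>(X, y, S). max_compl C Cb A b \<epsilon> X y S)"
  have "\<exists>p. Q p" using assms unfolding Q_def by blast
  then have "Q (SOME p. Q p)" by (rule someI_ex)
  moreover obtain X' y' S' where eq: "(SOME p. Q p) = (X', y', S')" by (cases "SOME p. Q p") auto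
  ultimately have mc: "max_compl C Cb A b \<epsilon> X' y' S'" by (simp add: Q_def)
  have "col_space X' = col_space X" using mc assms
    by (intro equalityI primal_range) (auto simp: max_compl_def dest: rel_interior_subset[THEN subsetD])
  moreover have "col_space S' = col_space S" using mc assms
    by (intro equalityI dual_range) (auto simp: max_compl_def dest: rel_interior_subset[THEN subsetD])
  moreover have "opt_partition C Cb A b \<epsilon> = (col_space X',
        orthogonal_comp {u + v | u v. u \<in> col_space X' \<and> v \<in> col_space S'}, col_space S')"
    unfolding opt_partition_def Q_def[symmetric] eq by simp
  ultimately show ?thesis by simp
qed



lemma orth_frob:
  assumes "symmetric_mat (X::real^'n^'n)" "\<And>a c. (X *v a) \<bullet> (S *v c) = 0"
  shows "frob X S = 0"
proof -
  have "(\<Sum>k\<in>UNIV. X$i$k * S$k$i) = (X *v axis i 1) \<bullet> (S *v axis i 1)" for i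
    using assms(1) by (simp add: matrix_vector_mult_basis column_def inner_vec_def sym_iff)
  then show ?thesis unfolding frob_expand using assms(2) by simp
qed

lemma frob_zero_orth:
  assumes "psd S" "psd (X::real^'n^'n)" "frob S X = 0"
  shows "(X *v a) \<bullet> (S *v c) = 0"
proof -
  have "S ** X = 0" using frob_psd_zero[OF assms] .
  then have "S *v (X *v a) = 0" by (simp add: matrix_vector_mul_assoc)
  moreover have "(X *v a) \<bullet> (S *v c) = (S *v (X *v a)) \<bullet> c"
    using sym_inner[of S "X *v a" c] assms(1) by (simp add: psd_def)
  ultimately show ?thesis by simp
qed

lemma frob_eps: "frob (C + e *\<^sub>R Cb) X = frob C X + e * frob Cb X"
  by (simp add: frob_add_left frob_scale_left)

lemma col_eq_rank:
  assumes "col_space Y \<subseteq> col_space (X::real^'n^'n)" "rank Y = rank X"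
  shows "col_space Y = col_space X"
  using assms subspace_dim_equal[OF subspace_col subspace_col, of Y X]
  by (simp add: rank_dim_range col_space_def)

theorem proposition3:
  fixes C Cb :: "real^'n^'n" and A :: "'m::finite \<Rightarrow> real^'n^'n" and b :: "real^'m"
    and I :: "real set" and \<epsilon>bar \<epsilon>hat :: real
  assumes symC: "symmetric_mat C" and symCb: "symmetric_mat Cb"
    and symA: "\<forall>i. symmetric_mat (A i)"
    and indepA: "inj A" and indepA': "independent (range A)"
    and primal_slater: "\<exists>X. pd X \<and> (\<forall>i. frob (A i) X = b $ i)"
    and dual_slater: "\<exists>y S. pd S \<and> (\<Sum>i\<in>UNIV. y $ i *\<^sub>R A i) + S = C"
    and inv: "invariancy_interval C Cb A b I"
    and bd: "\<epsilon>bar \<in> frontier I" and bdE: "\<epsilon>bar \<in> interior (E_set C Cb A b)"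
    and hat: "\<epsilon>hat \<in> I"
  shows "\<forall>Xh yh Sh Xb yb Sb.
           max_compl C Cb A b \<epsilon>hat Xh yh Sh \<longrightarrow> max_compl C Cb A b \<epsilon>bar Xb yb Sb \<longrightarrow>
           rank Xh \<noteq> rank Xb \<or> rank Sh \<noteq> rank Sb"
proof (intro allI impI)
  fix Xh yh Sh Xb yb Sb
  assume mh: "max_compl C Cb A b \<epsilon>hat Xh yh Sh" and mb: "max_compl C Cb A b \<epsilon>bar Xb yb Sb"
  show "rank Xh \<noteq> rank Xb \<or> rank Sh \<noteq> rank Sb"
  proof (rule ccontr)
    assume "\<not> (rank Xh \<noteq> rank Xb \<or> rank Sh \<noteq> rank Sb)"
    then have rX: "rank Xh = rank Xb" and rS: "rank Sh = rank Sb" by auto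
    note SDa = SD[OF symC symCb symA indepA indepA' primal_slater dual_slater]
    let ?E = "E_set C Cb A b"
    let ?P = "opt_partition C Cb A b"
    have invs: "invariancy_set C Cb A b I" and Iopen: "open I"
      using inv unfolding invariancy_interval_def by simp_all
    have Isub: "I \<subseteq> interior ?E" using invs unfolding invariancy_set_def by (elim conjE)
    have Iconst: "\<forall>e1\<in>I. \<forall>e2\<in>I. ?P e1 = ?P e2" using invs unfolding invariancy_set_def by (elim conjE)
    have Imax': "\<forall>J. I \<subseteq> J \<and> J \<subseteq> interior ?E \<and> (\<forall>e1\<in>J. \<forall>e2\<in>J. ?P e1 = ?P e2) \<longrightarrow> J = I"
      using invs unfolding invariancy_set_def by (elim conjE)
    have Imax: "\<And>J. I \<subseteq> J \<Longrightarrow> J \<subseteq> interior ?E \<Longrightarrow> (\<forall>e1\<in>J. \<forall>e2\<in>J. ?P e1 = ?P e2) \<Longrightarrow> J = I"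
      using Imax' by blast
    have barnI: "\<epsilon>bar \<notin> I" using bd Iopen by (simp add: frontier_def interior_open)
    have barcl: "\<epsilon>bar \<in> closure I" using bd by (simp add: frontier_def)
    have hatE: "\<epsilon>hat \<in> interior ?E" using hat Isub by blast
    have Xh: "Xh \<in> primal_opt C Cb A b \<epsilon>hat" and Sh: "(yh, Sh) \<in> dual_opt C Cb A b \<epsilon>hat"
      using mh by (auto simp: max_compl_def dest: rel_interior_subset[THEN subsetD])
    have Xb: "Xb \<in> primal_opt C Cb A b \<epsilon>bar" and Sb: "(yb, Sb) \<in> dual_opt C Cb A b \<epsilon>bar"
      using mb by (auto simp: max_compl_def dest: rel_interior_subset[THEN subsetD])
    have Xhf: "Xh \<in> primal_feas A b" using Xh by (simp add: primal_opt_def)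
    have psdXh: "psd Xh" using Xhf by (simp add: primal_feas_def)
    have symXh: "symmetric_mat Xh" using psdXh by (simp add: psd_def)
    have psdSh: "psd Sh" using Sh by (simp add: dual_opt_def dual_feas_def)
    have psdSb: "psd Sb" using Sb by (simp add: dual_opt_def dual_feas_def)
    have gap_h: "frob Sh Xh = 0" using SDa(3)[OF hatE Xh Sh] .
    have orth_h: "(Xh *v a) \<bullet> (Sh *v c) = 0" for a c using frob_zero_orth[OF psdSh psdXh gap_h] .
    have Ph: "?P \<epsilon>hat = (col_space Xh, orthogonal_comp {u + v | u v. u \<in> col_space Xh \<and> v \<in> col_space Sh}, col_space Sh)"
      by (rule opt_partition_eq[OF mh])
    have atI: "\<exists>X y S. max_compl C Cb A b e X y S \<and> col_space X = col_space Xh \<and> col_space S = col_space Sh"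
      if "e \<in> I" for e
    proof -
      have eE: "e \<in> interior ?E" using that Isub by blast
      obtain X y S where m: "max_compl C Cb A b e X y S" using max_compl_ex SDa(1,2)[OF eE] by blast
      have "?P e = ?P \<epsilon>hat" using Iconst that hat by blast
      then have "col_space X = col_space Xh \<and> col_space S = col_space Sh"
        unfolding opt_partition_eq[OF m] Ph by simp
      then show ?thesis using m by blast
    qed
    have Xh_opt: "frob (C + e *\<^sub>R Cb) Xh \<le> frob (C + e *\<^sub>R Cb) X'" if eI: "e \<in> I" and X'f: "X' \<in> primal_feas A b" for e X'
    proof -
      obtain X y S where m: "max_compl C Cb A b e X y S" and cS: "col_space S = col_space Sh"
        using atI[OF eI] by blast
      have Sd: "(y, S) \<in> dual_feas C Cb A e"
        using m by (auto simp: max_compl_def dual_opt_def dest: rel_interior_subset[THEN subsetD])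
      have "(Xh *v a) \<bullet> (S *v c) = 0" for a c
      proof -
        have "S *v c \<in> col_space Sh" using cS by (auto simp: col_space_def)
        then obtain c' where "S *v c = Sh *v c'" by (auto simp: col_space_def)
        then show ?thesis using orth_h by simp
      qed
      then have "frob Xh S = 0" by (rule orth_frob[OF symXh])
      then have "frob S Xh = 0" by (simp add: frob_comm)
      moreover have "0 \<le> frob S X'" using Sd X'f by (intro frob_psd_nonneg) (auto simp: dual_feas_def primal_feas_def)
      ultimately show ?thesis using weak_id[OF Xhf Sd] weak_id[OF X'f Sd] by simp
    qed
    have Xh_bar: "Xh \<in> primal_opt C Cb A b \<epsilon>bar"
      unfolding primal_opt_def
    proof (intro CollectI conjI ballI Xhf)
      fix X' assume X'f: "X' \<in> primal_feas A b"
      have "I \<subseteq> {e. frob C Xh + e * frob Cb Xh \<le> frob C X' + e * frob Cb X'}"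
        using Xh_opt[OF _ X'f] by (auto simp: frob_eps)
      moreover have "closed {e. frob C Xh + e * frob Cb Xh \<le> frob C X' + e * frob Cb X'}"
        by (intro closed_Collect_le continuous_intros)
      ultimately have "closure I \<subseteq> {e. frob C Xh + e * frob Cb Xh \<le> frob C X' + e * frob Cb X'}"
        by (rule closure_minimal)
      then show "frob (C + \<epsilon>bar *\<^sub>R Cb) Xh \<le> frob (C + \<epsilon>bar *\<^sub>R Cb) X'" using barcl by (auto simp: frob_eps)
    qed
    have colX: "col_space Xh = col_space Xb"
      using col_eq_rank[OF primal_range[OF _ Xh_bar] rX] mb by (simp add: max_compl_def)
    have gap_b: "frob Sb Xh = 0" using SDa(3)[OF bdE Xh_bar Sb] .
    obtain \<delta> where dp: "\<delta> > 0" and ballI: "ball \<epsilon>hat \<delta> \<subseteq> I" using Iopen hat open_contains_ball by blast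
    have dne: "\<epsilon>bar \<noteq> \<epsilon>hat" using barnI hat by blast
    define d where "d = \<bar>\<epsilon>bar - \<epsilon>hat\<bar>"
    have dpos: "d > 0" using dne by (simp add: d_def)
    define t where "t = min (1/2) (\<delta> / (2 * d))"
    have tp: "t > 0" "t < 1" using dp dpos by (auto simp: t_def)
    define et where "et = (1 - t) * \<epsilon>hat + t * \<epsilon>bar"
    have "\<epsilon>hat - et = t * (\<epsilon>hat - \<epsilon>bar)" by (simp add: et_def algebra_simps)
    then have "dist \<epsilon>hat et = t * d" using tp
      by (simp add: dist_real_def d_def abs_mult abs_minus_commute)
    also have "\<dots> \<le> \<delta>/2" using dpos tp by (simp add: t_def field_simps min_def)
    finally have etI: "et \<in> I" using ballI dp by auto
    define yt where "yt = (1 - t) *\<^sub>R yh + t *\<^sub>R yb"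
    define St where "St = (1 - t) *\<^sub>R Sh + t *\<^sub>R Sb"
    have Stf: "(yt, St) \<in> dual_feas C Cb A et"
      unfolding yt_def St_def et_def using Sh Sb tp
      by (intro dual_feas_comb) (auto simp: dual_opt_def)
    have gap_t: "frob St Xh = 0" using gap_h gap_b by (simp add: St_def frob_add_left frob_scale_left)
    have St_opt: "(yt, St) \<in> dual_opt C Cb A b et"
      unfolding dual_opt_def
    proof (intro CollectI conjI, simp add: Stf, clarify)
      fix y' S' assume "(y', S') \<in> dual_feas C Cb A et"
      then show "b \<bullet> y' \<le> b \<bullet> yt" using weak_dual[OF Xhf] weak_id[OF Xhf Stf] gap_t by fastforce
    qed
    obtain X y S where m: "max_compl C Cb A b et X y S" and cS: "col_space S = col_space Sh"
      using atI[OF etI] by blast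
    have "col_space St \<subseteq> col_space S"
      using dual_range[OF _ St_opt] m unfolding max_compl_def by blast
    moreover have "col_space Sb \<subseteq> col_space St"
    proof (rule col_mono)
      show "symmetric_mat St" "symmetric_mat Sb" using psdSh psdSb
        by (auto simp: St_def psd_def intro!: sym_add sym_scale)
      fix w assume Stw: "St *v w = 0"
      have "0 = w \<bullet> (St *v w)" using Stw by simp
      also have "\<dots> = (1 - t) * (w \<bullet> (Sh *v w)) + t * (w \<bullet> (Sb *v w))"
        by (simp add: St_def algebra_simps scaleR_matrix_vector_assoc[symmetric])
      finally have eq: "(1 - t) * (w \<bullet> (Sh *v w)) + t * (w \<bullet> (Sb *v w)) = 0" by simp
      have "0 \<le> w \<bullet> (Sh *v w)" "0 \<le> w \<bullet> (Sb *v w)" using psdSh psdSb by (auto simp: psd_def)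
      then have "t * (w \<bullet> (Sb *v w)) = 0" using eq tp
        by (smt (verit) mult_nonneg_nonneg)
      then have "w \<bullet> (Sb *v w) = 0" using tp by simp
      then show "Sb *v w = 0" using psd_null[OF psdSb] by simp
    qed
    ultimately have "col_space Sb \<subseteq> col_space Sh" using cS by simp
    then have colS: "col_space Sb = col_space Sh" using col_eq_rank rS by metis
    have Pb: "?P \<epsilon>bar = ?P \<epsilon>hat"
      unfolding opt_partition_eq[OF mb] Ph colX colS ..
    have "insert \<epsilon>bar I = I"
    proof (rule Imax)
      show "I \<subseteq> insert \<epsilon>bar I" by blast
      show "insert \<epsilon>bar I \<subseteq> interior ?E" using Isub bdE by blast
      show "\<forall>e1\<in>insert \<epsilon>bar I. \<forall>e2\<in>insert \<epsilon>bar I. ?P e1 = ?P e2"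
        using Iconst hat Pb by (metis insert_iff)
    qed
    then show False using barnI by blast
  qed
qed

end
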